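(* In the setting below, let $p,q\in X$ have the same support $S_p=S_q$ with $|S_p|>2$. If both $p$ and $q$ have strange indices, then these strange indices coincide.
   Context: Setting: $E=\{e_0,\dots,e_n\}\subset\mathbb R^n$ is the vertex set of an $n$-simplex with $e_0+\cdots+e_n=0$, and $X\subset\mathbb R^n\setminus\{0\}$ is a finite set with $E\subseteq X$, no element of $X$ a positive multiple of another, such that every $n+1$ points of $X$ are in good position. (A finite set $A$ is in conical position if $0\notin\operatorname{conv}A$ and no point of $A$ lies in the positive hull—set of nonnegative linear combinations—of the other points; it is in good position otherwise.) For $p\in X$, the support $S_p$ is the minimal subset of $E$ whose positive hull contains $p$; then $p=\sum_{e_i\in S_p}\lambda_ie_i$ uniquely with all $\lambda_i>0$. Convention: each $p\in X$ is replaced by the positive multiple for which $\min_{e_i\in S_p}\lambda_i=1$. An element $e_j\in S_p$ is a strange index of $p$ if $\lambda_j>1$ (under these hypotheses there is at most one). *)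

theory Defs
  imports "HOL-Analysis.Analysis"
begin

definition pos_hull :: "'a::real_vector set \<Rightarrow> 'a set" where
  "pos_hull A = {x. \<exists>c. (\<forall>a\<in>A. 0 \<le> c a) \<and> x = (\<Sum>a\<in>A. c a *\<^sub>R a)}"

definition conical_position :: "'a::real_vector set \<Rightarrow> bool" where
  "conical_position A \<longleftrightarrow> 0 \<notin> convex hull A \<and> (\<forall>a\<in>A. a \<notin> pos_hull (A - {a}))"

definition good_position :: "'a::real_vector set \<Rightarrow> bool" where
  "good_position A \<longleftrightarrow> \<not> conical_position A"

definition support :: "'a::real_vector set \<Rightarrow> 'a \<Rightarrow> 'a set" where
  "support E p = (THE S. S \<subseteq> E \<and> p \<in> pos_hull S \<and> (\<forall>T. T \<subset> S \<longrightarrow> p \<notin> pos_hull T))"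

definition coeffs :: "'a::real_vector set \<Rightarrow> 'a \<Rightarrow> 'a \<Rightarrow> real" where
  "coeffs E p = (THE l. (\<forall>e\<in>support E p. 0 < l e) \<and> (\<forall>e. e \<notin> support E p \<longrightarrow> l e = 0)
                      \<and> p = (\<Sum>e\<in>support E p. l e *\<^sub>R e))"

definition norm_coeffs :: "'a::real_vector set \<Rightarrow> 'a \<Rightarrow> 'a \<Rightarrow> real" where
  "norm_coeffs E p e = coeffs E p e / Min (coeffs E p ` support E p)"

definition strange_index :: "'a::real_vector set \<Rightarrow> 'a \<Rightarrow> 'a \<Rightarrow> bool" where
  "strange_index E p e \<longleftrightarrow> e \<in> support E p \<and> norm_coeffs E p e > 1"

end

theory Submission imports Defs begin

lemma E_const:
  fixes E :: "'a::real_vector set"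
  assumes fin: "finite E" and ind: "\<not> affine_dependent E" and sum0: "(\<Sum>e\<in>E. e) = 0"
    and f0: "(\<Sum>e\<in>E. f e *\<^sub>R e) = 0" and e1: "e1 \<in> E" and e2: "e2 \<in> E"
  shows "f e1 = f e2"
proof -
  define c where "c = sum f E / real (card E)"
  define u where "u = (\<lambda>e. f e - c)"
  have cne: "card E \<noteq> 0" using fin e1 by auto
  have "sum u E = sum f E - real (card E) * c" by (simp add: u_def sum_subtractf)
  also have "\<dots> = 0" using cne by (simp add: c_def)
  finally have su: "sum u E = 0" .
  have "(\<Sum>e\<in>E. u e *\<^sub>R e) = (\<Sum>e\<in>E. f e *\<^sub>R e) - c *\<^sub>R (\<Sum>e\<in>E. e)"
    by (simp add: u_def scaleR_diff_left sum_subtractf scaleR_sum_right)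
  also have "\<dots> = 0" using f0 sum0 by simp
  finally have "(\<Sum>e\<in>E. u e *\<^sub>R e) = 0" .
  with su ind fin have "\<forall>v\<in>E. u v = 0" using affine_dependent_explicit_finite[OF fin] by blast
  with e1 e2 show ?thesis by (simp add: u_def)
qed

lemma in_pos_hull_E:
  fixes E :: "(real^'n) set"
  assumes card: "card E = CARD('n) + 1" and ind: "\<not> affine_dependent E" and sum0: "(\<Sum>e\<in>E. e) = 0"
  shows "\<exists>f. (\<forall>e\<in>E. 0 \<le> f e) \<and> p = (\<Sum>e\<in>E. f e *\<^sub>R e)"
proof -
  have fin: "finite E" using card card.infinite by fastforce
  have "aff_dim E = int (CARD('n))" using aff_dim_affine_independent[OF ind] card by simp
  hence "affine hull E = UNIV" using aff_dim_eq_full[where 'n="real^'n"] by simp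
  hence "p \<in> affine hull E" by simp
  then obtain u where u: "(\<Sum>v\<in>E. u v *\<^sub>R v) = p" unfolding affine_hull_finite[OF fin] by blast
  have ne: "E \<noteq> {}" using card by auto
  define m where "m = Min (u ` E)"
  have "\<forall>e\<in>E. 0 \<le> u e - m" using fin m_def by auto
  moreover have "(\<Sum>e\<in>E. (u e - m) *\<^sub>R e) = p"
    using u sum0 by (simp add: scaleR_diff_left sum_subtractf scaleR_sum_right[symmetric])
  ultimately show ?thesis by metis
qed


locale sset =
  fixes E :: "(real^'n) set"
  assumes card: "card E = CARD('n) + 1" and ind: "\<not> affine_dependent E" and sum0: "(\<Sum>e\<in>E. e) = 0"
begin

lemma fin: "finite E" using card card.infinite by fastforce
lemma ne: "E \<noteq> {}" using card by auto

definition minimal where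
  "minimal p S \<longleftrightarrow> S \<subseteq> E \<and> p \<in> pos_hull S \<and> (\<forall>T. T \<subset> S \<longrightarrow> p \<notin> pos_hull T)"

lemma zero_drop:
  assumes "finite S" "\<forall>a\<in>S. 0 \<le> c a" "p = (\<Sum>a\<in>S. c a *\<^sub>R a)" "e \<in> S" "c e = 0"
  shows "p \<in> pos_hull (S - {e})"
proof -
  have "p = (\<Sum>a\<in>S - {e}. c a *\<^sub>R a)"
    using assms by (simp add: sum.remove)
  thus ?thesis unfolding pos_hull_def using assms(2) by auto
qed

lemma min_props:
  assumes "minimal p S"
  shows "S \<noteq> E \<and> (\<exists>F. (\<forall>e\<in>S. F e > 0) \<and> (\<forall>e. e\<notin>S \<longrightarrow> F e = 0) \<and> p = (\<Sum>e\<in>E. F e *\<^sub>R e))"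
proof -
  have SE: "S \<subseteq> E" and ph: "p \<in> pos_hull S" and mn: "\<forall>T. T \<subset> S \<longrightarrow> p \<notin> pos_hull T"
    using assms unfolding minimal_def by auto
  have finS: "finite S" using SE fin finite_subset by blast
  obtain c where c0: "\<forall>a\<in>S. 0 \<le> c a" and cp: "p = (\<Sum>a\<in>S. c a *\<^sub>R a)"
    using ph unfolding pos_hull_def by blast
  have cpos: "\<forall>e\<in>S. c e > 0"
  proof
    fix e assume e: "e \<in> S"
    show "c e > 0"
    proof (rule ccontr)
      assume "\<not> c e > 0" hence "c e = 0" using c0 e by force
      hence "p \<in> pos_hull (S - {e})" using zero_drop[OF finS c0 cp e] by simp
      moreover have "S - {e} \<subset> S" using e by auto
      ultimately show False using mn by blast
    qed
  qed
  have SnE: "S \<noteq> E"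
  proof
    assume SEq: "S = E"
    define m where "m = Min (c ` E)"
    have "m \<in> c ` E" using Min_in[of "c ` E"] fin ne m_def by auto
    then obtain e0 where e0: "e0 \<in> E" "c e0 = m" by auto
    have "\<forall>a\<in>E. 0 \<le> c a - m" using fin m_def by auto
    moreover have "p = (\<Sum>a\<in>E. (c a - m) *\<^sub>R a)"
      using cp SEq sum0 by (simp add: scaleR_diff_left sum_subtractf scaleR_sum_right[symmetric])
    ultimately have "p \<in> pos_hull (E - {e0})" using zero_drop[OF fin] e0 by auto
    moreover have "E - {e0} \<subset> S" using e0 SEq by auto
    ultimately show False using mn by blast
  qed
  define F where "F = (\<lambda>e. if e \<in> S then c e else 0)"
  have "(\<Sum>e\<in>E. F e *\<^sub>R e) = (\<Sum>e\<in>S. F e *\<^sub>R e)"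
    by (rule sum.mono_neutral_right[OF fin SE]) (auto simp: F_def)
  also have "\<dots> = p" using cp by (simp add: F_def)
  finally have "\<exists>F. (\<forall>e\<in>S. F e > 0) \<and> (\<forall>e. e\<notin>S \<longrightarrow> F e = 0) \<and> p = (\<Sum>e\<in>E. F e *\<^sub>R e)"
    using cpos by (intro exI[of _ F]) (auto simp: F_def)
  thus ?thesis using SnE by blast
qed

lemma rep_unique:
  assumes "S \<subseteq> E" "S \<noteq> E" "\<forall>e. e\<notin>S \<longrightarrow> F e = 0" "\<forall>e. e\<notin>S \<longrightarrow> G e = 0"
    "(\<Sum>e\<in>E. F e *\<^sub>R e) = (\<Sum>e\<in>E. G e *\<^sub>R e)"
  shows "F = G"
proof
  fix e
  obtain m where m: "m \<in> E" "m \<notin> S" using assms(1,2) by blast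
  have "(\<Sum>e\<in>E. (F e - G e) *\<^sub>R e) = 0"
    using assms(5) by (simp add: scaleR_diff_left sum_subtractf)
  hence k: "\<And>e. e \<in> E \<Longrightarrow> F e - G e = F m - G m"
    using E_const[OF fin ind sum0, of "\<lambda>e. F e - G e"] m by blast
  show "F e = G e"
  proof (cases "e \<in> E")
    case True thus ?thesis using k[OF True] m assms(3,4) by simp
  next
    case False hence "e \<notin> S" using assms(1) by blast
    thus ?thesis using assms(3,4) by simp
  qed
qed

lemma minimal_unique:
  assumes "minimal p S" "minimal p T" shows "S = T"
proof -
  obtain F where F: "\<forall>e\<in>S. F e > 0" "\<forall>e. e\<notin>S \<longrightarrow> F e = 0" "p = (\<Sum>e\<in>E. F e *\<^sub>R e)"
    and SE: "S \<noteq> E" using min_props[OF assms(1)] by blast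
  obtain G where G: "\<forall>e\<in>T. G e > 0" "\<forall>e. e\<notin>T \<longrightarrow> G e = 0" "p = (\<Sum>e\<in>E. G e *\<^sub>R e)"
    and TE: "T \<noteq> E" using min_props[OF assms(2)] by blast
  have Ss: "S \<subseteq> E" "T \<subseteq> E" using assms unfolding minimal_def by auto
  obtain m where m: "m \<in> E" "m \<notin> S" using Ss SE by blast
  obtain m' where m': "m' \<in> E" "m' \<notin> T" using Ss TE by blast
  have "(\<Sum>e\<in>E. (F e - G e) *\<^sub>R e) = 0"
    using F(3) G(3) by (simp add: scaleR_diff_left sum_subtractf)
  hence k: "\<And>e. e \<in> E \<Longrightarrow> F e - G e = F m - G m"
    using E_const[OF fin ind sum0, of "\<lambda>e. F e - G e"] m by blast
  have "F m - G m \<le> 0" using F(2) m G(1,2) by (metis diff_le_0_iff_le less_eq_real_def)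
  moreover have "F m' - G m' \<ge> 0" using G(2) m' F(1,2) by (metis diff_ge_0_iff_ge less_eq_real_def)
  ultimately have "F m - G m = 0" using k[OF m'(1)] by linarith
  hence FG: "\<And>e. e \<in> E \<Longrightarrow> F e = G e" using k by auto
  show ?thesis
  proof (rule set_eqI)
    fix e show "e \<in> S \<longleftrightarrow> e \<in> T"
      using FG[of e] F(1,2) G(1,2) Ss by (metis less_irrefl subsetD)
  qed
qed

lemma minimal_exists: "\<exists>S. minimal p S"
proof -
  obtain f where "\<forall>e\<in>E. 0 \<le> f e" "p = (\<Sum>e\<in>E. f e *\<^sub>R e)"
    using in_pos_hull_E[OF card ind sum0] by blast
  hence "p \<in> pos_hull E" unfolding pos_hull_def by auto
  then obtain S where S: "S \<subseteq> E \<and> p \<in> pos_hull S" and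
     least: "\<forall>T. T \<subseteq> E \<and> p \<in> pos_hull T \<longrightarrow> card S \<le> card T"
    using ex_has_least_nat[of "\<lambda>S. S \<subseteq> E \<and> p \<in> pos_hull S" E card] by blast
  have "\<forall>T. T \<subset> S \<longrightarrow> p \<notin> pos_hull T"
  proof (intro allI impI)
    fix T assume T: "T \<subset> S"
    have "finite S" using S fin finite_subset by blast
    hence "card T < card S" using psubset_card_mono T by blast
    moreover have "T \<subseteq> E" using T S by blast
    ultimately show "p \<notin> pos_hull T" using least by (meson not_le)
  qed
  thus ?thesis using S unfolding minimal_def by blast
qed

lemma support_eq: "minimal p S \<Longrightarrow> support E p = S"
  unfolding support_def minimal_def[symmetric]
  by (rule the1_equality) (use minimal_unique in blast)+

lemma support_props:
  "\<exists>F. support E p \<subseteq> E \<and> support E p \<noteq> E \<and> coeffs E p = F \<and> (\<forall>e\<in>support E p. F e > 0)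
     \<and> (\<forall>e. e\<notin>support E p \<longrightarrow> F e = 0) \<and> p = (\<Sum>e\<in>E. F e *\<^sub>R e)"
proof -
  obtain S where S: "minimal p S" using minimal_exists by blast
  hence sp: "support E p = S" by (rule support_eq)
  obtain F where F: "\<forall>e\<in>S. F e > 0" "\<forall>e. e\<notin>S \<longrightarrow> F e = 0" "p = (\<Sum>e\<in>E. F e *\<^sub>R e)"
    and SE: "S \<noteq> E" using min_props[OF S] by blast
  have SsE: "S \<subseteq> E" using S unfolding minimal_def by auto
  have FS: "p = (\<Sum>e\<in>S. F e *\<^sub>R e)"
    using F(2,3) sum.mono_neutral_right[OF fin SsE, of "\<lambda>e. F e *\<^sub>R e"] by auto
  have "coeffs E p = F"
    unfolding coeffs_def sp
  proof (rule the_equality)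
    show "(\<forall>e\<in>S. 0 < F e) \<and> (\<forall>e. e \<notin> S \<longrightarrow> F e = 0) \<and> p = (\<Sum>e\<in>S. F e *\<^sub>R e)"
      using F FS by blast
  next
    fix l assume l: "(\<forall>e\<in>S. 0 < l e) \<and> (\<forall>e. e \<notin> S \<longrightarrow> l e = 0) \<and> p = (\<Sum>e\<in>S. l e *\<^sub>R e)"
    have "(\<Sum>e\<in>E. l e *\<^sub>R e) = (\<Sum>e\<in>S. l e *\<^sub>R e)"
      using l by (intro sum.mono_neutral_right[OF fin SsE]) auto
    show "l = F" by (rule rep_unique[OF SsE SE]) (use l F \<open>(\<Sum>e\<in>E. l e *\<^sub>R e) = _\<close> in auto)
  qed
  thus ?thesis using sp SsE SE F by blast
qed

lemma support_E: assumes "e \<in> E" "e \<noteq> 0" shows "support E e = {e}"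
proof (rule support_eq)
  have "e \<in> pos_hull {e}" unfolding pos_hull_def by (rule CollectI, rule exI[of _ "\<lambda>_. 1"]) simp
  moreover have "pos_hull {} = {0}" unfolding pos_hull_def by simp
  ultimately show "minimal e {e}" unfolding minimal_def using assms
    by (metis (no_types, lifting) insert_subset empty_subsetI psubset_eq subset_singletonD singletonD)
qed

end

lemma conical_intro:
  fixes A :: "'a::real_vector set"
  assumes fA: "finite A"
  and c1: "\<And>d. (\<Sum>a\<in>A. d a *\<^sub>R a) = 0 \<Longrightarrow> \<forall>a\<in>A. 0 \<le> d a \<Longrightarrow> \<forall>a\<in>A. d a = 0"
  and c2: "\<And>d a0. a0 \<in> A \<Longrightarrow> (\<Sum>a\<in>A. d a *\<^sub>R a) = 0 \<Longrightarrow> d a0 = -1 \<Longrightarrow> \<forall>a\<in>A-{a0}. 0 \<le> d a \<Longrightarrow> False"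
  shows "conical_position A"
  unfolding conical_position_def
proof
  show "0 \<notin> convex hull A"
  proof
    assume "0 \<in> convex hull A"
    then obtain u where u: "\<forall>x\<in>A. 0 \<le> u x" "sum u A = 1" "(\<Sum>x\<in>A. u x *\<^sub>R x) = 0"
      unfolding convex_hull_finite[OF fA] by blast
    hence "\<forall>a\<in>A. u a = 0" using c1 by blast
    hence "sum u A = 0" by simp
    with u(2) show False by simp
  qed
  show "\<forall>a\<in>A. a \<notin> pos_hull (A - {a})"
  proof (intro ballI notI)
    fix a0 assume a0: "a0 \<in> A" "a0 \<in> pos_hull (A - {a0})"
    then obtain c where c: "\<forall>a\<in>A - {a0}. 0 \<le> c a" "a0 = (\<Sum>a\<in>A - {a0}. c a *\<^sub>R a)"
      unfolding pos_hull_def by blast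
    define d where "d = c(a0 := -1)"
    have "(\<Sum>a\<in>A. d a *\<^sub>R a) = d a0 *\<^sub>R a0 + (\<Sum>a\<in>A - {a0}. d a *\<^sub>R a)"
      using fA a0(1) by (simp add: sum.remove)
    also have "(\<Sum>a\<in>A - {a0}. d a *\<^sub>R a) = (\<Sum>a\<in>A - {a0}. c a *\<^sub>R a)"
      by (rule sum.cong) (auto simp: d_def)
    finally have "(\<Sum>a\<in>A. d a *\<^sub>R a) = 0" using c(2) by (simp add: d_def)
    moreover have "\<forall>a\<in>A-{a0}. 0 \<le> d a" using c(1) by (simp add: d_def)
    moreover have "d a0 = -1" by (simp add: d_def)
    ultimately show False using c2[OF a0(1)] by blast
  qed
qed

lemma sum_minus_ext:
  assumes "finite E" "B \<subseteq> E"
  shows "(\<Sum>x\<in>B. g x) = (\<Sum>x\<in>E. if x \<in> B then g x else 0)"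
  using assms by (simp add: sum.If_cases Int_absorb1)

context sset begin

lemma one_strange:
  fixes X :: "(real^'n) set"
  assumes good: "\<forall>A. A \<subseteq> X \<and> card A = CARD('n) + 1 \<longrightarrow> good_position A"
    and EX: "E \<subseteq> X" and pX: "p \<in> X" and pE: "p \<notin> E"
    and sp: "strange_index E p ej" and e: "e \<in> support E p" "e \<noteq> ej"
  shows "coeffs E p e = Min (coeffs E p ` support E p)"
proof (rule ccontr)
  assume neq: "coeffs E p e \<noteq> Min (coeffs E p ` support E p)"
  define S where "S = support E p"
  define F where "F = coeffs E p"
  define L where "L = Min (F ` S)"
  have props: "S \<subseteq> E" "S \<noteq> E" "\<forall>e\<in>S. F e > 0" "\<forall>e. e\<notin>S \<longrightarrow> F e = 0" "p = (\<Sum>e\<in>E. F e *\<^sub>R e)"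
    using support_props[of p] unfolding S_def F_def by auto
  have finS: "finite S" using props(1) fin finite_subset by blast
  have ejS: "ej \<in> S" using sp unfolding strange_index_def S_def by simp
  have FSne: "F ` S \<noteq> {}" using ejS by blast
  have LinS: "L \<in> F ` S" unfolding L_def by (rule Min_in[OF finite_imageI[OF finS] FSne])
  then obtain i where i: "i \<in> S" "F i = L" by blast
  have Lpos: "L > 0" using i props(3) by auto
  have FeL: "F e > L" using neq e(1) finS unfolding L_def F_def S_def
    by (metis Min_le finite_imageI image_eqI order_le_neq_trans)
  have "norm_coeffs E p ej > 1" using sp unfolding strange_index_def by simp
  hence "F ej / L > 1" unfolding norm_coeffs_def F_def L_def S_def .
  hence FejL: "F ej > L" using Lpos by (simp add: less_divide_eq)
  obtain m where m: "m \<in> E" "m \<notin> S" using props(1,2) by blast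
  have iE: "i \<in> E" using i props(1) by blast
  define A where "A = insert p (E - {i})"
  have fA: "finite A" unfolding A_def using fin by simp
  have "card A = Suc (card (E - {i}))" unfolding A_def using pE fin by simp
  also have "\<dots> = card E" by (rule card_Suc_Diff1[OF fin iE])
  finally have cA: "card A = CARD('n) + 1" using card by simp
  have AX: "A \<subseteq> X" unfolding A_def using EX pX by blast
  have K: "\<forall>x\<in>E-{i}. d x = d p * (L - F x)" if d0: "(\<Sum>a\<in>A. d a *\<^sub>R a) = 0" for d
  proof -
    define g where "g = (\<lambda>x. d p * F x + (if x \<in> E - {i} then d x else 0))"
    have "(\<Sum>a\<in>A. d a *\<^sub>R a) = d p *\<^sub>R p + (\<Sum>x\<in>E-{i}. d x *\<^sub>R x)"
      unfolding A_def using pE fin by simp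
    also have "(\<Sum>x\<in>E-{i}. d x *\<^sub>R x) = (\<Sum>x\<in>E. (if x \<in> E - {i} then d x else 0) *\<^sub>R x)"
      unfolding sum_minus_ext[OF fin Diff_subset[of E "{i}"]] by (rule sum.cong) auto
    also have "d p *\<^sub>R p = (\<Sum>x\<in>E. (d p * F x) *\<^sub>R x)"
      using props(5) by (simp add: scaleR_sum_right)
    finally have "(\<Sum>x\<in>E. g x *\<^sub>R x) = 0" using d0
      by (simp add: g_def scaleR_add_left sum.distrib)
    hence gc: "\<And>x. x \<in> E \<Longrightarrow> g x = g i" using E_const[OF fin ind sum0] iE by blast
    show ?thesis
    proof
      fix x assume x: "x \<in> E - {i}"
      show "d x = d p * (L - F x)" using gc[of x] x i(2) by (simp add: g_def algebra_simps)
    qed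
  qed
  have ejE: "ej \<in> E - {i}" using ejS props(1) FejL i(2) by auto
  have eE: "e \<in> E - {i}" using e(1) props(1) FeL i(2) unfolding S_def by auto
  have mE: "m \<in> E - {i}" using m i by auto
  have "conical_position A"
  proof (rule conical_intro[OF fA])
    fix d assume d0: "(\<Sum>a\<in>A. d a *\<^sub>R a) = 0" and nn: "\<forall>a\<in>A. 0 \<le> d a"
    note k = K[OF d0]
    have dp: "d p \<ge> 0" using nn unfolding A_def by simp
    have "d ej \<ge> 0" using nn ejE unfolding A_def by simp
    hence "d p * (L - F ej) \<ge> 0" using k ejE by simp
    hence "d p = 0" using dp FejL by (smt (verit) mult_pos_neg)
    thus "\<forall>a\<in>A. d a = 0" using k unfolding A_def by auto
  next
    fix d a0 assume a0: "a0 \<in> A" and d0: "(\<Sum>a\<in>A. d a *\<^sub>R a) = 0" and m1: "d a0 = -1"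
      and nn: "\<forall>a\<in>A-{a0}. 0 \<le> d a"
    note k = K[OF d0]
    show False
    proof (cases "a0 = p")
      case True
      have "d m \<ge> 0" using nn mE pE m(1) True unfolding A_def by auto
      moreover have "d m = - L" using k mE m props(4) m1 True by simp
      ultimately show False using Lpos by simp
    next
      case False
      hence a0E: "a0 \<in> E - {i}" using a0 unfolding A_def by simp
      have dp: "d p \<ge> 0" using nn False unfolding A_def by simp
      define x where "x = (if a0 = ej then e else ej)"
      have xE: "x \<in> E - {i}" "x \<noteq> a0" "F x > L" using ejE eE FeL FejL e(2) unfolding x_def by auto
      have "d x \<ge> 0" using nn xE unfolding A_def by simp
      hence "d p * (L - F x) \<ge> 0" using k xE by simp
      hence "d p = 0" using dp xE(3) by (smt (verit) mult_pos_neg)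
      thus False using k a0E m1 by simp
    qed
  qed
  thus False using good AX cA unfolding good_position_def by blast
qed

end

theorem proposition6p3:
  fixes E X :: "(real ^ 'n) set" and p q ej ek :: "real ^ 'n"
  assumes E_card: "card E = CARD('n) + 1"
    and E_simplex: "\<not> affine_dependent E"
    and E_sum: "(\<Sum>e\<in>E. e) = 0"
    and X_fin: "finite X"
    and X_nz: "0 \<notin> X"
    and E_sub: "E \<subseteq> X"
    and X_nomult: "\<forall>x\<in>X. \<forall>y\<in>X. \<forall>c::real. c > 0 \<and> y = c *\<^sub>R x \<longrightarrow> x = y"
    and X_good: "\<forall>A. A \<subseteq> X \<and> card A = CARD('n) + 1 \<longrightarrow> good_position A"
    and p: "p \<in> X" and q: "q \<in> X"
    and same_supp: "support E p = support E q"
    and supp_card: "card (support E p) > 2"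
    and sp: "strange_index E p ej"
    and sq: "strange_index E q ek"
  shows "ej = ek"
proof (rule ccontr)
  assume jk: "ej \<noteq> ek"
  interpret sset E using E_card E_simplex E_sum by unfold_locales
  define S where "S = support E p"
  define F where "F = coeffs E p"
  define G where "G = coeffs E q"
  define Lp where "Lp = Min (F ` S)"
  define Lq where "Lq = Min (G ` S)"
  have pE: "p \<notin> E"
  proof
    assume "p \<in> E" hence "support E p = {p}" using support_E X_nz p by auto
    thus False using supp_card by simp
  qed
  have qE: "q \<notin> E"
  proof
    assume "q \<in> E" hence "support E q = {q}" using support_E X_nz q by auto
    thus False using supp_card same_supp by simp
  qed
  have Fp: "S \<subseteq> E" "S \<noteq> E" "\<forall>e\<in>S. F e > 0" "\<forall>e. e\<notin>S \<longrightarrow> F e = 0" "p = (\<Sum>e\<in>E. F e *\<^sub>R e)"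
    using support_props[of p] unfolding S_def F_def by auto
  have Gq: "\<forall>e\<in>S. G e > 0" "\<forall>e. e\<notin>S \<longrightarrow> G e = 0" "q = (\<Sum>e\<in>E. G e *\<^sub>R e)"
    using support_props[of q] unfolding S_def G_def same_supp by auto
  have finS: "finite S" using Fp(1) fin finite_subset by blast
  have ejS: "ej \<in> S" using sp unfolding strange_index_def S_def by simp
  have ekS: "ek \<in> S" using sq unfolding strange_index_def S_def same_supp by simp
  have FSne: "F ` S \<noteq> {}" "G ` S \<noteq> {}" using ejS by blast+
  have LpS: "Lp \<in> F ` S" unfolding Lp_def by (rule Min_in[OF finite_imageI[OF finS] FSne(1)])
  have LqS: "Lq \<in> G ` S" unfolding Lq_def by (rule Min_in[OF finite_imageI[OF finS] FSne(2)])
  have Lpos: "Lp > 0" "Lq > 0" using LpS LqS Fp(3) Gq(1) by auto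
  have "norm_coeffs E p ej > 1" using sp unfolding strange_index_def by simp
  hence "F ej / Lp > 1" unfolding norm_coeffs_def F_def Lp_def S_def .
  hence Fej: "F ej > Lp" using Lpos by (simp add: less_divide_eq)
  have "norm_coeffs E q ek > 1" using sq unfolding strange_index_def by simp
  hence "G ek / Lq > 1" unfolding norm_coeffs_def G_def Lq_def S_def same_supp .
  hence Gek: "G ek > Lq" using Lpos by (simp add: less_divide_eq)
  have Fo: "\<And>x. x \<in> S \<Longrightarrow> x \<noteq> ej \<Longrightarrow> F x = Lp"
    using one_strange[OF X_good E_sub p pE sp] unfolding F_def Lp_def S_def by blast
  have Go: "\<And>x. x \<in> S \<Longrightarrow> x \<noteq> ek \<Longrightarrow> G x = Lq"
    using one_strange[OF X_good E_sub q qE sq] unfolding G_def Lq_def S_def same_supp by blast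
  have pq: "p \<noteq> q"
  proof
    assume "p = q" hence "G = F" unfolding F_def G_def by simp
    have "F ek = Lp" using Fo[OF ekS] jk by simp
    moreover have "Lq = Lp" unfolding Lp_def Lq_def using \<open>G = F\<close> by simp
    ultimately show False using Gek \<open>G = F\<close> by simp
  qed
  have "card (S - {ej, ek}) > 0"
  proof -
    have "card (S - {ej, ek}) = card S - card {ej, ek}"
      by (rule card_Diff_subset) (use ejS ekS in auto)
    moreover have "card {ej, ek} = 2" using jk by simp
    ultimately show ?thesis using supp_card unfolding S_def by linarith
  qed
  then obtain r where r: "r \<in> S" "r \<noteq> ej" "r \<noteq> ek" by (metis card_gt_0_iff DiffE ex_in_conv insertCI)
  obtain m where m: "m \<in> E" "m \<notin> S" using Fp(1,2) by blast
  have rE: "r \<in> E" using r Fp(1) by blast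
  have rm: "r \<noteq> m" using r m by blast
  define B where "B = E - {r, m}"
  define A where "A = insert p (insert q B)"
  have fA: "finite A" unfolding A_def B_def using fin by simp
  have cB: "card B + 2 = card E"
  proof -
    have "Suc (card (E - {r})) = card E" by (rule card_Suc_Diff1[OF fin rE])
    moreover have "Suc (card (E - {r} - {m})) = card (E - {r})"
      by (rule card_Suc_Diff1) (use fin m rm in auto)
    moreover have "E - {r} - {m} = B" unfolding B_def by auto
    ultimately show ?thesis by simp
  qed
  have "card A = card E" unfolding A_def using pE qE pq fin cB by (simp add: B_def)
  hence cA: "card A = CARD('n) + 1" using E_card by simp
  have AX: "A \<subseteq> X" unfolding A_def B_def using E_sub p q by blast
  have K: "d p * F r + d q * G r = 0 \<and> (\<forall>x\<in>B. d x = - (d p * F x + d q * G x))"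
    if d0: "(\<Sum>a\<in>A. d a *\<^sub>R a) = 0" for d
  proof -
    define g where "g = (\<lambda>x. d p * F x + d q * G x + (if x \<in> B then d x else 0))"
    have "(\<Sum>a\<in>A. d a *\<^sub>R a) = d p *\<^sub>R p + d q *\<^sub>R q + (\<Sum>x\<in>B. d x *\<^sub>R x)"
      unfolding A_def B_def using pE qE pq fin by simp
    also have "(\<Sum>x\<in>B. d x *\<^sub>R x) = (\<Sum>x\<in>E. (if x \<in> B then d x else 0) *\<^sub>R x)"
      unfolding B_def sum_minus_ext[OF fin Diff_subset[of E "{r,m}"]] by (rule sum.cong) auto
    also have "d p *\<^sub>R p = (\<Sum>x\<in>E. (d p * F x) *\<^sub>R x)"
      using Fp(5) by (simp add: scaleR_sum_right)
    also have "d q *\<^sub>R q = (\<Sum>x\<in>E. (d q * G x) *\<^sub>R x)"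
      using Gq(3) by (simp add: scaleR_sum_right)
    finally have "(\<Sum>x\<in>E. g x *\<^sub>R x) = 0" using d0
      by (simp add: g_def scaleR_add_left sum.distrib)
    hence gc: "\<And>x. x \<in> E \<Longrightarrow> g x = g m" using E_const[OF fin E_simplex E_sum] m by blast
    have gm: "g m = 0" using m Fp(4) Gq(2) by (simp add: g_def B_def)
    have "g r = 0" using gc[OF rE] gm by simp
    hence 1: "d p * F r + d q * G r = 0" by (simp add: g_def B_def)
    have "\<forall>x\<in>B. d x = - (d p * F x + d q * G x)"
    proof
      fix x assume x: "x \<in> B"
      hence "g x = 0" using gc gm unfolding B_def by auto
      thus "d x = - (d p * F x + d q * G x)" using x by (simp add: g_def)
    qed
    with 1 show ?thesis by blast
  qed
  have pB: "p \<notin> B" "q \<notin> B" using pE qE unfolding B_def by auto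
  have Fr: "F r = Lp" "G r = Lq" using Fo Go r by auto
  have ekB: "ek \<in> B" and ejB: "ej \<in> B" using ekS ejS Fp(1) r m unfolding B_def by auto
  have "conical_position A"
  proof (rule conical_intro[OF fA])
    fix d assume d0: "(\<Sum>a\<in>A. d a *\<^sub>R a) = 0" and nn: "\<forall>a\<in>A. 0 \<le> d a"
    note k = K[OF d0]
    have dp: "d p \<ge> 0" "d q \<ge> 0" using nn unfolding A_def by auto
    have "d p * F r \<ge> 0" "d q * G r \<ge> 0" using dp Lpos Fr by auto
    hence "d p * F r = 0" "d q * G r = 0" using k by linarith+
    hence "d p = 0" "d q = 0" using Lpos Fr by auto
    thus "\<forall>a\<in>A. d a = 0" using k unfolding A_def by auto
  next
    fix d a0 assume a0: "a0 \<in> A" and d0: "(\<Sum>a\<in>A. d a *\<^sub>R a) = 0" and m1: "d a0 = -1"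
      and nn: "\<forall>a\<in>A-{a0}. 0 \<le> d a"
    note k = K[OF d0]
    show False
    proof (cases "a0 = p")
      case True
      have dq: "d q \<ge> 0" using nn True pq unfolding A_def by auto
      have e1: "d q * Lq = Lp" using k True m1 Fr by simp
      have "d ek \<ge> 0" using nn ekB True pB unfolding A_def by auto
      hence e2: "d q * G ek \<le> F ek" using k ekB True m1 by simp
      have "F ek = Lp" using Fo ekS jk by auto
      have "d q > 0" using e1 Lpos dq by (metis less_eq_real_def mult_zero_left)
      hence "d q * G ek > d q * Lq" using Gek by simp
      thus False using e1 e2 \<open>F ek = Lp\<close> by linarith
    next
      case np: False
      show False
      proof (cases "a0 = q")
        case True
        have dp: "d p \<ge> 0" using nn True pq unfolding A_def by auto
        have e1: "d p * Lp = Lq" using k True m1 Fr by simp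
        have "d ej \<ge> 0" using nn ejB True pB unfolding A_def by auto
        hence e2: "d p * F ej \<le> G ej" using k ejB True m1 by simp
        have "G ej = Lq" using Go ejS jk by auto
        have "d p > 0" using e1 Lpos dp by (metis less_eq_real_def mult_zero_left)
        hence "d p * F ej > d p * Lp" using Fej by simp
        thus False using e1 e2 \<open>G ej = Lq\<close> by linarith
      next
        case False
        hence a0B: "a0 \<in> B" using a0 np unfolding A_def by simp
        have dp: "d p \<ge> 0" "d q \<ge> 0" using nn np False unfolding A_def by auto
        have "d p * F r \<ge> 0" "d q * G r \<ge> 0" using dp Lpos Fr by auto
        hence "d p * F r = 0" "d q * G r = 0" using k by linarith+
        hence "d p = 0" "d q = 0" using Lpos Fr by auto
        thus False using k a0B m1 by simp
      qed
    qed
  qed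
  thus False using X_good AX cA unfolding good_position_def by blast
qed

end
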